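(* Let $p$ be a prime and let $G_1,\ldots,G_n$ be finite groups. Then \[ 1-\chi\big(\mathcal F^*_{\prod_{i=1}^nG_i}\big)=\prod_{i=1}^n\big(1-\chi(\mathcal F^*_{G_i})\big). \]
   Context: For a finite group $X$, $\mathcal F^*_X$ is the category whose objects are the nonidentity $p$-subgroups of $X$ and whose morphism sets are $\mathcal F^*_X(H,K)=C_X(H)\backslash N_X(H,K)$, where $N_X(H,K)=\{g\in X: g^{-1}Hg\le K\}$, with composition induced by multiplication in $X$. Leinster Euler characteristic: for a finite category $\mathcal C$ let $\zeta(a,b)=|\mathcal C(a,b)|$; a weighting is $k^\bullet:\mathrm{Ob}(\mathcal C)\to\mathbb Q$ with $\sum_b\zeta(a,b)k^b=1$ for all $a$, a coweighting is $k_\bullet$ with $\sum_ak_a\zeta(a,b)=1$ for all $b$; if both exist, $\chi(\mathcal C)=\sum_bk^b=\sum_ak_a$. *)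

theory Defs
  imports "HOL-Algebra.Algebra"
begin

text \<open>A finite category is represented by its finite set of objects Ob and its
  zeta function z a b = number of morphisms a \<rightarrow> b.\<close>

definition is_weighting :: "'o set \<Rightarrow> ('o \<Rightarrow> 'o \<Rightarrow> nat) \<Rightarrow> ('o \<Rightarrow> rat) \<Rightarrow> bool" where
  "is_weighting Ob z k \<longleftrightarrow> (\<forall>a\<in>Ob. (\<Sum>b\<in>Ob. of_nat (z a b) * k b) = 1)"

definition is_coweighting :: "'o set \<Rightarrow> ('o \<Rightarrow> 'o \<Rightarrow> nat) \<Rightarrow> ('o \<Rightarrow> rat) \<Rightarrow> bool" where
  "is_coweighting Ob z k \<longleftrightarrow> (\<forall>b\<in>Ob. (\<Sum>a\<in>Ob. k a * of_nat (z a b)) = 1)"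

text \<open>The Euler characteristic: defined when both a weighting and a coweighting exist,
  as the total weight of a weighting (independent of the choice).\<close>
definition euler_char :: "'o set \<Rightarrow> ('o \<Rightarrow> 'o \<Rightarrow> nat) \<Rightarrow> rat" where
  "euler_char Ob z =
     (if (\<exists>k. is_weighting Ob z k) \<and> (\<exists>k. is_coweighting Ob z k)
      then (\<Sum>b\<in>Ob. (SOME k. is_weighting Ob z k) b) else 0)"

definition nonid_p_subgroups :: "nat \<Rightarrow> ('a, 'b) monoid_scheme \<Rightarrow> 'a set set" where
  "nonid_p_subgroups p Gr =
     {H. subgroup H Gr \<and> (\<exists>k. card H = p ^ k) \<and> H \<noteq> {one Gr}}"

definition transporter :: "('a, 'b) monoid_scheme \<Rightarrow> 'a set \<Rightarrow> 'a set \<Rightarrow> 'a set" where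
  "transporter Gr H K =
     {g \<in> carrier Gr. (\<lambda>h. monoid.mult Gr (monoid.mult Gr (m_inv Gr g) h) g) ` H \<subseteq> K}"

definition centralizer :: "('a, 'b) monoid_scheme \<Rightarrow> 'a set \<Rightarrow> 'a set" where
  "centralizer Gr H = {g \<in> carrier Gr. \<forall>h\<in>H. monoid.mult Gr g h = monoid.mult Gr h g}"

text \<open>Morphism set C_X(H)\N_X(H,K): the orbits C_X(H) g, g \<in> N_X(H,K).\<close>
definition Fstar_hom :: "('a, 'b) monoid_scheme \<Rightarrow> 'a set \<Rightarrow> 'a set \<Rightarrow> 'a set set" where
  "Fstar_hom Gr H K = (\<lambda>g. r_coset Gr (centralizer Gr H) g) ` transporter Gr H K"

definition Fstar_zeta :: "('a, 'b) monoid_scheme \<Rightarrow> 'a set \<Rightarrow> 'a set \<Rightarrow> nat" where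
  "Fstar_zeta Gr H K = card (Fstar_hom Gr H K)"

definition chi_Fstar :: "nat \<Rightarrow> ('a, 'b) monoid_scheme \<Rightarrow> rat" where
  "chi_Fstar p Gr = euler_char (nonid_p_subgroups p Gr) (Fstar_zeta Gr)"

end

theory Submission
  imports Defs
begin


lemma tri_up_exists:
  fixes f :: "'x set \<Rightarrow> 'r::ab_group_add"
  assumes "finite S"
  shows "\<exists>k. \<forall>H\<in>S. (\<Sum>K\<in>{K\<in>S. H \<subseteq> K}. k K) = f H"
  using assms
proof (induction "card S" arbitrary: S rule: less_induct)
  case less
  show ?case
  proof (cases "S = {}")
    case True then show ?thesis by auto
  next
    case False
    obtain M where M: "M \<in> S" "\<forall>b\<in>S. b \<le> M \<longrightarrow> M = b"
      using finite_has_minimal[OF less.prems False] by blast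
    let ?S = "S - {M}"
    have "card ?S < card S" using M(1) less.prems by (meson card_Diff1_less)
    then obtain k where k: "\<forall>H\<in>?S. (\<Sum>K\<in>{K\<in>?S. H \<subseteq> K}. k K) = f H"
      using less.hyps[of ?S] less.prems by auto
    define k' where "k' = k(M := f M - (\<Sum>K\<in>{K\<in>?S. M \<subseteq> K}. k K))"
    have "\<forall>H\<in>S. (\<Sum>K\<in>{K\<in>S. H \<subseteq> K}. k' K) = f H"
    proof
      fix H assume H: "H \<in> S"
      show "(\<Sum>K\<in>{K\<in>S. H \<subseteq> K}. k' K) = f H"
      proof (cases "H = M")
        case True
        have e: "{K\<in>S. M \<subseteq> K} = insert M {K\<in>?S. M \<subseteq> K}" using M by auto
        have fin: "finite {K\<in>?S. M \<subseteq> K}" using less.prems by auto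
        have "(\<Sum>K\<in>{K\<in>?S. M \<subseteq> K}. k' K) = (\<Sum>K\<in>{K\<in>?S. M \<subseteq> K}. k K)"
          by (rule sum.cong) (auto simp: k'_def)
        then show ?thesis unfolding True e using fin by (simp add: k'_def)
      next
        case False
        have e: "{K\<in>S. H \<subseteq> K} = {K\<in>?S. H \<subseteq> K}" using M H False by auto
        have "(\<Sum>K\<in>{K\<in>?S. H \<subseteq> K}. k' K) = (\<Sum>K\<in>{K\<in>?S. H \<subseteq> K}. k K)"
          by (rule sum.cong) (auto simp: k'_def)
        then show ?thesis unfolding e using k H False by auto
      qed
    qed
    then show ?thesis by blast
  qed
qed

lemma tri_down_exists:
  fixes f :: "'x set \<Rightarrow> 'r::ab_group_add"
  assumes "finite S"
  shows "\<exists>k. \<forall>H\<in>S. (\<Sum>K\<in>{K\<in>S. K \<subseteq> H}. k K) = f H"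
  using assms
proof (induction "card S" arbitrary: S rule: less_induct)
  case less
  show ?case
  proof (cases "S = {}")
    case True then show ?thesis by auto
  next
    case False
    obtain M where M: "M \<in> S" "\<forall>b\<in>S. M \<le> b \<longrightarrow> M = b"
      using finite_has_maximal[OF less.prems False] by blast
    let ?S = "S - {M}"
    have "card ?S < card S" using M(1) less.prems by (meson card_Diff1_less)
    then obtain k where k: "\<forall>H\<in>?S. (\<Sum>K\<in>{K\<in>?S. K \<subseteq> H}. k K) = f H"
      using less.hyps[of ?S] less.prems by auto
    define k' where "k' = k(M := f M - (\<Sum>K\<in>{K\<in>?S. K \<subseteq> M}. k K))"
    have "\<forall>H\<in>S. (\<Sum>K\<in>{K\<in>S. K \<subseteq> H}. k' K) = f H"
    proof
      fix H assume H: "H \<in> S"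
      show "(\<Sum>K\<in>{K\<in>S. K \<subseteq> H}. k' K) = f H"
      proof (cases "H = M")
        case True
        have e: "{K\<in>S. K \<subseteq> M} = insert M {K\<in>?S. K \<subseteq> M}" using M by auto
        have fin: "finite {K\<in>?S. K \<subseteq> M}" using less.prems by auto
        have "(\<Sum>K\<in>{K\<in>?S. K \<subseteq> M}. k' K) = (\<Sum>K\<in>{K\<in>?S. K \<subseteq> M}. k K)"
          by (rule sum.cong) (auto simp: k'_def)
        then show ?thesis unfolding True e using fin by (simp add: k'_def)
      next
        case False
        have e: "{K\<in>S. K \<subseteq> H} = {K\<in>?S. K \<subseteq> H}" using M H False by auto
        have "(\<Sum>K\<in>{K\<in>?S. K \<subseteq> H}. k' K) = (\<Sum>K\<in>{K\<in>?S. K \<subseteq> H}. k K)"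
          by (rule sum.cong) (auto simp: k'_def)
        then show ?thesis unfolding e using k H False by auto
      qed
    qed
    then show ?thesis by blast
  qed
qed

lemma mobius_duality:
  fixes \<mu> \<phi> \<psi> :: "'x set \<Rightarrow> 'r::comm_ring_1"
  assumes S: "finite S" and b0: "b0 \<in> S"
    and mu: "\<forall>B\<in>S. (\<Sum>L\<in>{L\<in>S. L \<subseteq> B}. \<mu> L) = (if B = b0 then 1 else 0)"
    and phi: "\<forall>L\<in>S. \<phi> L = (\<Sum>B\<in>{B\<in>S. L \<subseteq> B}. \<psi> B)"
  shows "(\<Sum>L\<in>S. \<mu> L * \<phi> L) = \<psi> b0"
proof -
  have "(\<Sum>L\<in>S. \<mu> L * \<phi> L) = (\<Sum>L\<in>S. \<Sum>B\<in>{B\<in>S. L \<subseteq> B}. \<mu> L * \<psi> B)"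
    using phi by (simp add: sum_distrib_left)
  also have "\<dots> = (\<Sum>B\<in>S. \<Sum>L | L \<in> S \<and> L \<subseteq> B. \<mu> L * \<psi> B)"
    by (rule sum.swap_restrict[OF S S])
  also have "\<dots> = (\<Sum>B\<in>S. (\<Sum>L\<in>{L\<in>S. L \<subseteq> B}. \<mu> L) * \<psi> B)"
    by (simp add: sum_distrib_right)
  also have "\<dots> = (\<Sum>B\<in>S. (if B = b0 then \<psi> B else 0))"
    using mu by (intro sum.cong) auto
  also have "\<dots> = \<psi> b0" using S b0 by simp
  finally show ?thesis .
qed

lemma weight_coweight:
  assumes "finite Ob" "is_weighting Ob z k" "is_coweighting Ob z k'"
  shows "sum k Ob = sum k' Ob"
proof -
  have "sum k Ob = (\<Sum>b\<in>Ob. (\<Sum>a\<in>Ob. k' a * of_nat (z a b)) * k b)"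
    using assms(3) unfolding is_coweighting_def by simp
  also have "\<dots> = (\<Sum>b\<in>Ob. \<Sum>a\<in>Ob. k' a * (of_nat (z a b) * k b))"
    by (simp add: sum_distrib_right mult.assoc)
  also have "\<dots> = (\<Sum>a\<in>Ob. \<Sum>b\<in>Ob. k' a * (of_nat (z a b) * k b))"
    by (rule sum.swap)
  also have "\<dots> = (\<Sum>a\<in>Ob. k' a * (\<Sum>b\<in>Ob. of_nat (z a b) * k b))"
    by (simp add: sum_distrib_left)
  also have "\<dots> = sum k' Ob"
    using assms(2) unfolding is_weighting_def by simp
  finally show ?thesis .
qed

lemma euler_char_eq:
  assumes "finite Ob" "is_weighting Ob z k" "is_coweighting Ob z k'"
  shows "euler_char Ob z = sum k' Ob"
proof -
  have "is_weighting Ob z (SOME k. is_weighting Ob z k)"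
    using assms(2) by (metis (no_types, lifting) someI_ex)
  then show ?thesis unfolding euler_char_def using assms weight_coweight by auto
qed




definition psub :: "nat \<Rightarrow> ('a, 'b) monoid_scheme \<Rightarrow> 'a set set" where
  "psub p Gr = {H. subgroup H Gr \<and> (\<exists>k. card H = p ^ k)}"

definition cj :: "('a, 'b) monoid_scheme \<Rightarrow> 'a \<Rightarrow> 'a set \<Rightarrow> 'a set" where
  "cj Gr g H = (\<lambda>h. inv\<^bsub>Gr\<^esub> g \<otimes>\<^bsub>Gr\<^esub> h \<otimes>\<^bsub>Gr\<^esub> g) ` H"

lemma nonid_psub: "nonid_p_subgroups p Gr = psub p Gr - {{\<one>\<^bsub>Gr\<^esub>}}"
  unfolding nonid_p_subgroups_def psub_def by auto

context group begin

lemma cancel_l1: "\<lbrakk>g \<in> carrier G; x \<in> carrier G\<rbrakk> \<Longrightarrow> g \<otimes> (inv g \<otimes> x) = x"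
  by (simp add: m_assoc[symmetric])
lemma cancel_l2: "\<lbrakk>g \<in> carrier G; x \<in> carrier G\<rbrakk> \<Longrightarrow> inv g \<otimes> (g \<otimes> x) = x"
  by (simp add: m_assoc[symmetric])

lemma conj_mult: "\<lbrakk>a \<in> carrier G; b \<in> carrier G; g \<in> carrier G\<rbrakk> \<Longrightarrow>
   inv g \<otimes> a \<otimes> g \<otimes> (inv g \<otimes> b \<otimes> g) = inv g \<otimes> (a \<otimes> b) \<otimes> g"
  by (simp add: m_assoc cancel_l1)

lemma conj_inv: "\<lbrakk>a \<in> carrier G; g \<in> carrier G\<rbrakk> \<Longrightarrow> inv (inv g \<otimes> a \<otimes> g) = inv g \<otimes> inv a \<otimes> g"
  by (simp add: m_assoc inv_mult_group)

lemma conj_back1: "\<lbrakk>a \<in> carrier G; g \<in> carrier G\<rbrakk> \<Longrightarrow> g \<otimes> (inv g \<otimes> a \<otimes> g) \<otimes> inv g = a"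
  by (simp add: m_assoc cancel_l1)

lemma conj_back2: "\<lbrakk>a \<in> carrier G; g \<in> carrier G\<rbrakk> \<Longrightarrow> inv g \<otimes> (g \<otimes> a \<otimes> inv g) \<otimes> g = a"
  by (simp add: m_assoc cancel_l2)

lemma conj_prod: "\<lbrakk>h \<in> carrier G; c \<in> carrier G; g \<in> carrier G\<rbrakk> \<Longrightarrow>
   inv (c \<otimes> g) \<otimes> h \<otimes> (c \<otimes> g) = inv g \<otimes> (inv c \<otimes> h \<otimes> c) \<otimes> g"
  by (simp add: m_assoc inv_mult_group)

lemma comm_conj:
  assumes "h \<in> carrier G" "c \<in> carrier G" "c \<otimes> h = h \<otimes> c"
  shows "inv c \<otimes> h \<otimes> c = h"
proof -
  have "inv c \<otimes> h \<otimes> c = inv c \<otimes> (h \<otimes> c)" using assms by (simp add: m_assoc)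
  also have "\<dots> = inv c \<otimes> (c \<otimes> h)" using assms by simp
  also have "\<dots> = h" using assms(1,2) by (simp add: cancel_l2)
  finally show ?thesis .
qed

lemma comm_inv:
  assumes "h \<in> carrier G" "c \<in> carrier G" "c \<otimes> h = h \<otimes> c"
  shows "inv c \<otimes> h = h \<otimes> inv c"
proof -
  have "inv c \<otimes> h = (inv c \<otimes> h \<otimes> c) \<otimes> inv c" using assms by (simp add: m_assoc)
  also have "\<dots> = h \<otimes> inv c" using comm_conj[OF assms] by simp
  finally show ?thesis .
qed

lemma conj_inj:
  assumes "a \<in> carrier G" "b \<in> carrier G" "g \<in> carrier G" "inv g \<otimes> a \<otimes> g = inv g \<otimes> b \<otimes> g"
  shows "a = b"
  using assms by simp


lemma cj_subgroup:
  assumes g: "g \<in> carrier G" and H: "subgroup H G"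
  shows "subgroup (cj G g H) G"
proof (rule subgroupI)
  have Hc: "H \<subseteq> carrier G" using H subgroup.subset by blast
  show "cj G g H \<subseteq> carrier G" using Hc g by (auto simp: cj_def)
  show "cj G g H \<noteq> {}" using H subgroup.one_closed by (auto simp: cj_def)
  show "inv a \<in> cj G g H" if "a \<in> cj G g H" for a
    using that Hc g H by (auto simp: cj_def conj_inv subgroup.m_inv_closed)
  show "a \<otimes> b \<in> cj G g H" if ab: "a \<in> cj G g H" "b \<in> cj G g H" for a b
  proof -
    obtain x y where "x \<in> H" "y \<in> H" "a = inv g \<otimes> x \<otimes> g" "b = inv g \<otimes> y \<otimes> g"
      using ab unfolding cj_def by blast
    then show ?thesis using Hc g H
      by (auto simp: cj_def conj_mult subset_iff subgroup.m_closed)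
  qed
qed

lemma cj_card:
  assumes g: "g \<in> carrier G" and Hc: "H \<subseteq> carrier G"
  shows "card (cj G g H) = card H"
  unfolding cj_def
proof (rule card_image)
  show "inj_on (\<lambda>h. inv g \<otimes> h \<otimes> g) H"
  proof (rule inj_onI)
    fix x y assume "x \<in> H" "y \<in> H" "inv g \<otimes> x \<otimes> g = inv g \<otimes> y \<otimes> g"
    then show "x = y" using conj_inj g Hc by blast
  qed
qed

lemma cj_sub_iff:
  assumes g: "g \<in> carrier G" and Hc: "H \<subseteq> carrier G" and Kc: "K \<subseteq> carrier G"
  shows "cj G g H \<subseteq> K \<longleftrightarrow> H \<subseteq> (\<lambda>k. g \<otimes> k \<otimes> inv g) ` K"
proof
  assume a: "cj G g H \<subseteq> K"
  show "H \<subseteq> (\<lambda>k. g \<otimes> k \<otimes> inv g) ` K"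
  proof
    fix h assume h: "h \<in> H"
    have "inv g \<otimes> h \<otimes> g \<in> K" using a h by (auto simp: cj_def)
    moreover have "h = g \<otimes> (inv g \<otimes> h \<otimes> g) \<otimes> inv g" using conj_back1 h Hc g by auto
    ultimately show "h \<in> (\<lambda>k. g \<otimes> k \<otimes> inv g) ` K" by (rule rev_image_eqI)
  qed
next
  assume "H \<subseteq> (\<lambda>k. g \<otimes> k \<otimes> inv g) ` K"
  then show "cj G g H \<subseteq> K"
    using g Kc by (auto simp: cj_def conj_back2 subset_iff)
qed

lemma one_unique_sub: "\<lbrakk>subgroup H G; card H = 1\<rbrakk> \<Longrightarrow> H = {\<one>}"
  by (metis card_1_singletonE singletonD subgroup.one_closed)

lemma cj_psub:
  assumes g: "g \<in> carrier G" and K: "K \<in> psub p G"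
  shows "cj G g K \<in> psub p G"
proof -
  have Kc: "K \<subseteq> carrier G" using K subgroup.subset by (auto simp: psub_def)
  show ?thesis using K g Kc unfolding psub_def by (auto simp: cj_subgroup cj_card)
qed

lemma cj_nonid:
  assumes g: "g \<in> carrier G" and K: "K \<in> psub p G - {{\<one>}}"
  shows "cj G g K \<in> psub p G - {{\<one>}}"
proof -
  have Kc: "K \<subseteq> carrier G" using K subgroup.subset by (auto simp: psub_def)
  have "cj G g K \<noteq> {\<one>}"
  proof
    assume a: "cj G g K = {\<one>}"
    have "card K = 1" using cj_card[of g K] g Kc a by simp
    then show False using K one_unique_sub by (auto simp: psub_def)
  qed
  then show ?thesis using cj_psub[OF g] K by auto
qed

lemma conj'_eq: "g \<in> carrier G \<Longrightarrow> (\<lambda>k. g \<otimes> k \<otimes> inv g) ` K = cj G (inv g) K"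
  by (simp add: cj_def)

lemma conj'_psub:
  assumes g: "g \<in> carrier G" and K: "K \<in> psub p G"
  shows "(\<lambda>k. g \<otimes> k \<otimes> inv g) ` K \<in> psub p G"
  using cj_psub[OF inv_closed[OF g] K] conj'_eq[OF g] by simp

lemma conj'_nonid:
  assumes g: "g \<in> carrier G" and K: "K \<in> psub p G - {{\<one>}}"
  shows "(\<lambda>k. g \<otimes> k \<otimes> inv g) ` K \<in> psub p G - {{\<one>}}"
  using cj_nonid[OF inv_closed[OF g] K] conj'_eq[OF g] by simp

lemma centralizer_subgroup:
  assumes Hc: "H \<subseteq> carrier G"
  shows "subgroup (centralizer G H) G"
proof (rule subgroupI)
  show "centralizer G H \<subseteq> carrier G" by (auto simp: centralizer_def)
  show "centralizer G H \<noteq> {}" using Hc by (auto simp: centralizer_def intro!: exI[of _ \<one>])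
  show "inv a \<in> centralizer G H" if "a \<in> centralizer G H" for a
    using that Hc comm_inv by (auto simp: centralizer_def)
  show "a \<otimes> b \<in> centralizer G H" if "a \<in> centralizer G H" "b \<in> centralizer G H" for a b
    using that Hc by (auto simp: centralizer_def m_assoc subset_iff) (metis m_assoc)
qed

lemma centralizer_cj:
  assumes g: "g \<in> carrier G" and Hc: "H \<subseteq> carrier G"
  shows "centralizer G (cj G g H) = cj G g (centralizer G H)"
proof
  show "centralizer G (cj G g H) \<subseteq> cj G g (centralizer G H)"
  proof
    fix x assume x: "x \<in> centralizer G (cj G g H)"
    then have xc: "x \<in> carrier G" by (auto simp: centralizer_def)
    define y where "y = g \<otimes> x \<otimes> inv g"
    have yc: "y \<in> carrier G" using xc g by (simp add: y_def)
    have xy: "x = inv g \<otimes> y \<otimes> g" using xc g by (simp add: y_def conj_back2)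
    have "y \<otimes> h = h \<otimes> y" if h: "h \<in> H" for h
    proof -
      have hc: "h \<in> carrier G" using h Hc by auto
      have "x \<otimes> (inv g \<otimes> h \<otimes> g) = (inv g \<otimes> h \<otimes> g) \<otimes> x"
        using x h by (auto simp: centralizer_def cj_def)
      then have "inv g \<otimes> (y \<otimes> h) \<otimes> g = inv g \<otimes> (h \<otimes> y) \<otimes> g"
        using xy conj_mult hc yc g by metis
      then show ?thesis using conj_inj hc yc g by (meson m_closed)
    qed
    then have "y \<in> centralizer G H" using yc by (auto simp: centralizer_def)
    then show "x \<in> cj G g (centralizer G H)" using xy by (auto simp: cj_def)
  qed
next
  show "cj G g (centralizer G H) \<subseteq> centralizer G (cj G g H)"
  proof
    fix x assume "x \<in> cj G g (centralizer G H)"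
    then obtain y where y: "y \<in> centralizer G H" and xy: "x = inv g \<otimes> y \<otimes> g"
      by (auto simp: cj_def)
    have yc: "y \<in> carrier G" using y by (auto simp: centralizer_def)
    have "x \<otimes> k = k \<otimes> x" if k: "k \<in> cj G g H" for k
    proof -
      obtain h where h: "h \<in> H" "k = inv g \<otimes> h \<otimes> g" using k by (auto simp: cj_def)
      have hc: "h \<in> carrier G" using h Hc by auto
      have "y \<otimes> h = h \<otimes> y" using y h by (auto simp: centralizer_def)
      then show ?thesis using h xy conj_mult hc yc g by metis
    qed
    then show "x \<in> centralizer G (cj G g H)" using xy yc g by (auto simp: centralizer_def)
  qed
qed

lemma card_centralizer_cj:
  assumes g: "g \<in> carrier G" and Hc: "H \<subseteq> carrier G"
  shows "card (centralizer G (cj G g H)) = card (centralizer G H)"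
  using centralizer_cj[OF g Hc] cj_card[OF g] by (auto simp: centralizer_def)

lemma transporter_cj: "transporter G H K = {g \<in> carrier G. cj G g H \<subseteq> K}"
  by (simp add: transporter_def cj_def)

lemma card_transporter:
  assumes Hc: "H \<subseteq> carrier G" and fin: "finite (carrier G)"
  shows "card (transporter G H K) = Fstar_zeta G H K * card (centralizer G H)"
proof -
  let ?C = "centralizer G H" and ?N = "transporter G H K"
  have Csub: "subgroup ?C G" using centralizer_subgroup[OF Hc] .
  have Nc: "?N \<subseteq> carrier G" by (auto simp: transporter_def)
  have F: "Fstar_hom G H K = (\<lambda>g. ?C #> g) ` ?N" by (simp add: Fstar_hom_def)
  have cos_sub: "?C #> g \<subseteq> ?N" if g: "g \<in> ?N" for g
  proof
    fix x assume "x \<in> ?C #> g"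
    then obtain c where c: "c \<in> ?C" "x = c \<otimes> g" by (auto simp: r_coset_def)
    have gc: "g \<in> carrier G" using g Nc by auto
    have cc: "c \<in> carrier G" using c by (auto simp: centralizer_def)
    have "cj G x H = cj G g H"
    proof -
      have "inv (c \<otimes> g) \<otimes> h \<otimes> (c \<otimes> g) = inv g \<otimes> h \<otimes> g" if h: "h \<in> H" for h
      proof -
        have hc: "h \<in> carrier G" using h Hc by auto
        have "c \<otimes> h = h \<otimes> c" using c h by (auto simp: centralizer_def)
        then show ?thesis using conj_prod[OF hc cc gc] comm_conj[OF hc cc] by simp
      qed
      then show ?thesis using c by (auto simp: cj_def image_def)
    qed
    then show "x \<in> ?N" using g c gc cc by (auto simp: transporter_cj)
  qed
  have U: "\<Union>(Fstar_hom G H K) = ?N"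
  proof
    show "\<Union>(Fstar_hom G H K) \<subseteq> ?N" using cos_sub F by auto
    show "?N \<subseteq> \<Union>(Fstar_hom G H K)" unfolding F
      using rcos_self[OF _ Csub] Nc by blast
  qed
  have Fr: "Fstar_hom G H K \<subseteq> rcosets ?C" unfolding F RCOSETS_def using Nc by auto
  have disj: "disjoint (Fstar_hom G H K)"
    using rcos_disjoint[OF Csub] Fr pairwise_subset by blast
  have finF: "finite (Fstar_hom G H K)" using F Nc fin by (metis finite_imageI finite_subset)
  have "card ?N = sum card (Fstar_hom G H K)"
    using card_Union_disjoint[OF disj] U fin Nc finite_subset by (metis Union_upper)
  also have "\<dots> = (\<Sum>R\<in>Fstar_hom G H K. card ?C)"
  proof (rule sum.cong[OF refl])
    fix R assume "R \<in> Fstar_hom G H K"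
    then have "R \<in> rcosets ?C" using Fr by auto
    then show "card R = card ?C" using card_rcosets_equal[of R ?C] Csub subgroup.subset by metis
  qed
  also have "\<dots> = Fstar_zeta G H K * card ?C" by (simp add: Fstar_zeta_def)
  finally show ?thesis .
qed

end



lemma card_filter_sum:
  assumes "finite A"
  shows "(of_nat (card {g\<in>A. P g}) :: rat) = (\<Sum>g\<in>A. if P g then 1 else 0)"
proof -
  have "{g\<in>A. P g} = A \<inter> Collect P" by auto
  then show ?thesis using assms by (simp add: sum.If_cases)
qed

context group begin

lemma psub_finite: "finite (carrier G) \<Longrightarrow> finite (psub p G)"
  by (rule finite_subset[of _ "Pow (carrier G)"]) (auto simp: psub_def dest: subgroup.subset)

lemma one_psub: "{\<one>} \<in> psub p G"
  unfolding psub_def using triv_subgroup by (auto intro: exI[of _ 0])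

lemma psub_sub_one: "\<lbrakk>H \<in> psub p G; H \<subseteq> {\<one>}\<rbrakk> \<Longrightarrow> H = {\<one>}"
  unfolding psub_def using subgroup.one_closed by fastforce

lemma psub_one_sub: "H \<in> psub p G \<Longrightarrow> {\<one>} \<subseteq> H"
  unfolding psub_def using subgroup.one_closed by fastforce

lemma psub_carrier: "H \<in> psub p G \<Longrightarrow> H \<subseteq> carrier G"
  unfolding psub_def using subgroup.subset by blast

lemma centralizer_one: "centralizer G {\<one>} = carrier G"
  by (auto simp: centralizer_def)

lemma card_centralizer_pos:
  assumes "finite (carrier G)" "H \<subseteq> carrier G"
  shows "card (centralizer G H) > 0"
proof -
  have "\<one> \<in> centralizer G H" using assms by (auto simp: centralizer_def)
  moreover have "finite (centralizer G H)"
    using assms(1) by (rule finite_subset[rotated]) (auto simp: centralizer_def)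
  ultimately show ?thesis by (auto simp: card_gt_0_iff)
qed

lemma card_transporter_sum:
  assumes fin: "finite (carrier G)"
  shows "(of_nat (card (transporter G H K)) :: rat) = (\<Sum>g\<in>carrier G. if cj G g H \<subseteq> K then 1 else 0)"
  unfolding transporter_cj using card_filter_sum[OF fin] .

lemma zeta_eq:
  assumes fin: "finite (carrier G)" and Hc: "H \<subseteq> carrier G"
  shows "(of_nat (Fstar_zeta G H K) :: rat) =
    (\<Sum>g\<in>carrier G. if cj G g H \<subseteq> K then 1 else 0) / of_nat (card (centralizer G H))"
proof -
  have "of_nat (card (transporter G H K)) = (of_nat (Fstar_zeta G H K) :: rat) * of_nat (card (centralizer G H))"
    using card_transporter[OF Hc fin] by simp
  moreover have "card (centralizer G H) > 0" using card_centralizer_pos[OF fin Hc] .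
  ultimately show ?thesis using card_transporter_sum[OF fin, of H K] by (simp add: field_simps)
qed

lemma if01_mult: "(if P then 1 else 0) * (x::rat) = (if P then x else 0)"
  by simp

lemma chi_formula:
  fixes \<rho> :: "'a set \<Rightarrow> rat"
  assumes fin: "finite (carrier G)"
    and rho: "\<forall>A\<in>psub p G. (\<Sum>B\<in>{B\<in>psub p G. A \<subseteq> B}. \<rho> B) = of_nat (card (centralizer G A))"
  shows "1 - chi_Fstar p G = \<rho> {\<one>} / of_nat (card (carrier G))"
proof -
  let ?Sb = "psub p G"
  let ?S = "psub p G - {{\<one>}}"
  let ?n = "(of_nat (card (carrier G)) :: rat)"
  let ?c = "\<lambda>H. (of_nat (card (centralizer G H)) :: rat)"
  have finSb: "finite ?Sb" using psub_finite[OF fin] .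
  have finS: "finite ?S" using finSb by simp
  have npos: "?n > 0" using fin by (auto simp: card_gt_0_iff)
  have cpos: "?c H > 0" if "H \<in> ?Sb" for H
    using card_centralizer_pos[OF fin psub_carrier[OF that]] by simp
  obtain \<mu> :: "'a set \<Rightarrow> rat" where mu: "\<forall>K\<in>?Sb. (\<Sum>H\<in>{H\<in>?Sb. H \<subseteq> K}. \<mu> H) = (if K = {\<one>} then 1 else 0)"
    using tri_down_exists[OF finSb, where f="\<lambda>K. if K = {\<one>} then 1 else 0"] by blast
  have e1: "{H\<in>?Sb. H \<subseteq> {\<one>}} = {{\<one>}}" using one_psub psub_sub_one by auto
  have mu1: "\<mu> {\<one>} = 1"
  proof -
    have "(\<Sum>H\<in>{H\<in>?Sb. H \<subseteq> {\<one>}}. \<mu> H) = 1" using mu one_psub by auto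
    then show ?thesis unfolding e1 by simp
  qed
  have muS: "(\<Sum>H\<in>{H\<in>?S. H \<subseteq> K}. \<mu> H) = -1" if K: "K \<in> ?S" for K
  proof -
    have e: "{H\<in>?Sb. H \<subseteq> K} = insert {\<one>} {H\<in>?S. H \<subseteq> K}"
      using K one_psub psub_one_sub by auto
    have "0 = (\<Sum>H\<in>{H\<in>?Sb. H \<subseteq> K}. \<mu> H)" using mu K by auto
    also have "\<dots> = \<mu> {\<one>} + (\<Sum>H\<in>{H\<in>?S. H \<subseteq> K}. \<mu> H)"
      unfolding e using finS by (subst sum.insert) auto
    finally show ?thesis using mu1 by simp
  qed
  have dual: "(\<Sum>L\<in>?Sb. \<mu> L * ?c L) = \<rho> {\<one>}"
    by (rule mobius_duality[OF finSb one_psub mu]) (use rho in auto)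
  obtain k :: "'a set \<Rightarrow> rat" where k: "\<forall>H\<in>?S. (\<Sum>K\<in>{K\<in>?S. H \<subseteq> K}. k K) = ?c H / ?n"
    using tri_up_exists[OF finS, where f="\<lambda>H. ?c H / ?n"] by blast
  have W: "is_weighting ?S (Fstar_zeta G) k"
    unfolding is_weighting_def
  proof
    fix H assume H: "H \<in> ?S"
    have Hc: "H \<subseteq> carrier G" using H psub_carrier by auto
    have "(\<Sum>K\<in>?S. of_nat (Fstar_zeta G H K) * k K)
        = (\<Sum>K\<in>?S. (\<Sum>g\<in>carrier G. (if cj G g H \<subseteq> K then 1 else 0) * k K) / ?c H)"
      by (rule sum.cong[OF refl]) (simp only: zeta_eq[OF fin Hc] sum_distrib_right times_divide_eq_left)
    also have "\<dots> = (\<Sum>K\<in>?S. \<Sum>g\<in>carrier G. (if cj G g H \<subseteq> K then 1 else 0) * k K) / ?c H"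
      by (simp only: sum_divide_distrib)
    also have "\<dots> = (\<Sum>g\<in>carrier G. \<Sum>K\<in>?S. (if cj G g H \<subseteq> K then 1 else 0) * k K) / ?c H"
      by (rule arg_cong[where f="\<lambda>x. x / ?c H"], rule sum.swap)
    also have "\<dots> = (\<Sum>g\<in>carrier G. \<Sum>K\<in>{K\<in>?S. cj G g H \<subseteq> K}. k K) / ?c H"
      by (simp only: if01_mult sum.inter_filter[OF finS])
    also have "\<dots> = (\<Sum>g\<in>carrier G. ?c H / ?n) / ?c H"
    proof -
      have "(\<Sum>K\<in>{K\<in>?S. cj G g H \<subseteq> K}. k K) = ?c H / ?n" if g: "g \<in> carrier G" for g
        using k cj_nonid[OF g H] card_centralizer_cj[OF g Hc] by auto
      then show ?thesis by (metis (no_types, lifting) sum.cong)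
    qed
    also have "\<dots> = 1" using npos cpos[of H] H by simp
    finally show "(\<Sum>K\<in>?S. of_nat (Fstar_zeta G H K) * k K) = 1" .
  qed
  define k' where "k' H = - \<mu> H * ?c H / ?n" for H
  have CW: "is_coweighting ?S (Fstar_zeta G) k'"
    unfolding is_coweighting_def
  proof
    fix K assume K: "K \<in> ?S"
    have Kc: "K \<subseteq> carrier G" using K psub_carrier by auto
    have "(\<Sum>H\<in>?S. k' H * of_nat (Fstar_zeta G H K))
        = (\<Sum>H\<in>?S. - (\<Sum>g\<in>carrier G. (if cj G g H \<subseteq> K then 1 else 0) * \<mu> H) / ?n)"
    proof (rule sum.cong[OF refl])
      fix H assume H: "H \<in> ?S"
      have Hc: "H \<subseteq> carrier G" using H psub_carrier by auto
      have "k' H * of_nat (Fstar_zeta G H K) = - \<mu> H * (\<Sum>g\<in>carrier G. if cj G g H \<subseteq> K then 1 else 0) / ?n"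
        unfolding k'_def zeta_eq[OF fin Hc] using cpos[of H] H by simp
      also have "\<dots> = - (\<Sum>g\<in>carrier G. (if cj G g H \<subseteq> K then 1 else 0) * \<mu> H) / ?n"
        by (simp only: sum_distrib_right mult.commute[of "\<mu> H"] mult_minus_left)
      finally show "k' H * of_nat (Fstar_zeta G H K) = - (\<Sum>g\<in>carrier G. (if cj G g H \<subseteq> K then 1 else 0) * \<mu> H) / ?n" .
    qed
    also have "\<dots> = - (\<Sum>H\<in>?S. \<Sum>g\<in>carrier G. (if cj G g H \<subseteq> K then 1 else 0) * \<mu> H) / ?n"
      by (simp only: sum_divide_distrib[symmetric] sum_negf)
    also have "\<dots> = - (\<Sum>g\<in>carrier G. \<Sum>H\<in>?S. (if cj G g H \<subseteq> K then 1 else 0) * \<mu> H) / ?n"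
      by (subst sum.swap) (rule refl)
    also have "\<dots> = - (\<Sum>g\<in>carrier G. (-1 :: rat)) / ?n"
    proof -
      have "(\<Sum>H\<in>?S. (if cj G g H \<subseteq> K then 1 else 0) * \<mu> H) = -1" if g: "g \<in> carrier G" for g
      proof -
        have "(\<Sum>H\<in>?S. (if cj G g H \<subseteq> K then 1 else 0) * \<mu> H)
            = (\<Sum>H\<in>?S. if H \<subseteq> (\<lambda>k. g \<otimes> k \<otimes> inv g) ` K then \<mu> H else 0)"
          using cj_sub_iff[OF g _ Kc] psub_carrier by (intro sum.cong) auto
        also have "\<dots> = (\<Sum>H\<in>{H\<in>?S. H \<subseteq> (\<lambda>k. g \<otimes> k \<otimes> inv g) ` K}. \<mu> H)"
          by (simp only: sum.inter_filter[OF finS])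
        also have "\<dots> = -1" using muS conj'_nonid[OF g K] by blast
        finally show ?thesis .
      qed
      then show ?thesis by (metis (no_types, lifting) sum.cong)
    qed
    also have "\<dots> = 1" using npos by simp
    finally show "(\<Sum>H\<in>?S. k' H * of_nat (Fstar_zeta G H K)) = 1" .
  qed
  have chi: "chi_Fstar p G = sum k' ?S"
    unfolding chi_Fstar_def nonid_psub using euler_char_eq[OF finS W CW] by simp
  have Sb: "?Sb = insert {\<one>} ?S" using one_psub by auto
  have "(\<Sum>L\<in>?Sb. \<mu> L * ?c L) = \<mu> {\<one>} * ?c {\<one>} + (\<Sum>L\<in>?S. \<mu> L * ?c L)"
    by (subst Sb, subst sum.insert) (use finS in auto)
  also have "\<dots> = ?n + (\<Sum>L\<in>?S. \<mu> L * ?c L)" using mu1 centralizer_one by simp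
  finally have "\<rho> {\<one>} = ?n + (\<Sum>L\<in>?S. \<mu> L * ?c L)" using dual by simp
  moreover have "sum k' ?S = - (\<Sum>L\<in>?S. \<mu> L * ?c L) / ?n"
    unfolding k'_def by (simp only: sum_divide_distrib[symmetric] sum_negf mult_minus_left)
  ultimately show ?thesis using chi npos by (simp add: field_simps)
qed

end



lemma (in group) hom_img_card:
  assumes h: "h \<in> hom G Y" and Y: "group Y" and L: "subgroup L G" and fin: "finite L"
  shows "card (h ` L) * card {l\<in>L. h l = \<one>\<^bsub>Y\<^esub>} = card L"
proof -
  interpret Y: group Y by fact
  have gh: "group_hom G Y h" unfolding group_hom_def group_hom_axioms_def using h Y is_group by simp
  let ?K = "{l\<in>L. h l = \<one>\<^bsub>Y\<^esub>}"
  let ?F = "\<lambda>y. {l\<in>L. h l = y}"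
  have Lc: "L \<subseteq> carrier G" using L subgroup.subset by blast
  have hmul: "\<And>a b. a\<in>carrier G \<Longrightarrow> b\<in>carrier G \<Longrightarrow> h (a \<otimes> b) = h a \<otimes>\<^bsub>Y\<^esub> h b"
    using h by (simp add: hom_mult)
  have hcar: "\<And>a. a\<in>carrier G \<Longrightarrow> h a \<in> carrier Y" using h by (auto simp: hom_def)
  have fib: "card (?F (h x)) = card ?K" if x: "x \<in> L" for x
  proof -
    have xc: "x \<in> carrier G" using x Lc by auto
    have "bij_betw (\<lambda>k. x \<otimes> k) ?K (?F (h x))"
    proof (rule bij_betw_imageI)
      show "inj_on (\<lambda>k. x \<otimes> k) ?K"
      proof (rule inj_onI)
        fix a b assume a: "a \<in> ?K" and b: "b \<in> ?K" and e: "x \<otimes> a = x \<otimes> b"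
        have ac: "a \<in> carrier G" using a Lc by blast
        have bc: "b \<in> carrier G" using b Lc by blast
        show "a = b" using l_cancel[OF e ac bc xc] .
      qed
      show "(\<lambda>k. x \<otimes> k) ` ?K = ?F (h x)"
      proof
        show "(\<lambda>k. x \<otimes> k) ` ?K \<subseteq> ?F (h x)"
        proof
          fix l assume "l \<in> (\<lambda>k. x \<otimes> k) ` ?K"
          then obtain k where k: "k \<in> L" "h k = \<one>\<^bsub>Y\<^esub>" "l = x \<otimes> k" by blast
          have kc: "k \<in> carrier G" using k Lc by blast
          have "h l = h x \<otimes>\<^bsub>Y\<^esub> h k" using k(3) hmul[OF xc kc] by simp
          also have "\<dots> = h x" using k(2) Y.r_one[OF hcar[OF xc]] by simp
          finally have "h l = h x" .
          moreover have "l \<in> L" using subgroup.m_closed[OF L x k(1)] k(3) by simp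
          ultimately show "l \<in> ?F (h x)" by blast
        qed
        show "?F (h x) \<subseteq> (\<lambda>k. x \<otimes> k) ` ?K"
        proof
          fix l assume l: "l \<in> ?F (h x)"
          then have lL: "l \<in> L" and hl: "h l = h x" by auto
          have lc: "l \<in> carrier G" using lL Lc by blast
          have ixc: "inv x \<in> carrier G" using xc by simp
          have "inv x \<otimes> l \<in> L" using subgroup.m_closed[OF L subgroup.m_inv_closed[OF L x] lL] by simp
          moreover have "h (inv x \<otimes> l) = \<one>\<^bsub>Y\<^esub>"
          proof -
            have "h (inv x \<otimes> l) = h (inv x) \<otimes>\<^bsub>Y\<^esub> h l" using hmul[OF ixc lc] .
            also have "\<dots> = inv\<^bsub>Y\<^esub> (h x) \<otimes>\<^bsub>Y\<^esub> h x" using group_hom.hom_inv[OF gh xc] hl by simp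
            also have "\<dots> = \<one>\<^bsub>Y\<^esub>" using Y.l_inv[OF hcar[OF xc]] .
            finally show ?thesis .
          qed
          moreover have "l = x \<otimes> (inv x \<otimes> l)" using cancel_l1[OF xc lc] by simp
          ultimately show "l \<in> (\<lambda>k. x \<otimes> k) ` ?K" by blast
        qed
      qed
    qed
    then have "card ?K = card (?F (h x))" by (rule bij_betw_same_card)
    then show ?thesis by (rule sym)
  qed
  have U: "L = (\<Union>y\<in>h ` L. ?F y)" by auto
  have "card L = (\<Sum>y\<in>h ` L. card (?F y))"
    by (subst U, rule card_UN_disjoint) (use fin in auto)
  also have "\<dots> = (\<Sum>y\<in>h ` L. card ?K)" using fib by (intro sum.cong) auto
  finally show ?thesis by simp
qed

definition proj :: "'i \<Rightarrow> ('i \<Rightarrow> 'a) set \<Rightarrow> 'a set" where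
  "proj i L = (\<lambda>f. f i) ` L"

locale prodctx =
  fixes I :: "'i set" and G :: "'i \<Rightarrow> ('a, 'b) monoid_scheme" and p :: nat
  assumes finI: "finite I"
    and grp: "\<And>i. i \<in> I \<Longrightarrow> group (G i)"
    and finG: "\<And>i. i \<in> I \<Longrightarrow> finite (carrier (G i))"
    and prime: "Factorial_Ring.prime p"
begin

abbreviation PX where "PX \<equiv> product_group I G"

lemma X_group: "group PX" using grp by simp

lemma X_fin: "finite (carrier PX)" using finI finG by (simp add: finite_PiE)

lemma proj_hom: "i \<in> I \<Longrightarrow> (\<lambda>f. f i) \<in> hom PX (G i)"
  unfolding hom_def by (auto simp: PiE_iff)

lemma proj_psub:
  assumes L: "L \<in> psub p PX" and i: "i \<in> I"
  shows "proj i L \<in> psub p (G i)"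
proof -
  interpret Gi: group "G i" using grp i by simp
  interpret PX: group PX using X_group .
  have Ls: "subgroup L PX" using L by (simp add: psub_def)
  have gh: "group_hom PX (G i) (\<lambda>f. f i)"
    unfolding group_hom_def group_hom_axioms_def using proj_hom[OF i] X_group Gi.is_group by simp
  have sub: "subgroup (proj i L) (G i)"
    unfolding proj_def using group_hom.subgroup_img_is_subgroup[OF gh Ls] .
  obtain k where k: "card L = p ^ k" using L by (auto simp: psub_def)
  have finL: "finite L" using finite_subset[OF subgroup.subset[OF Ls] X_fin] .
  have "card (proj i L) dvd card L"
    unfolding proj_def
    by (subst PX.hom_img_card[OF proj_hom[OF i] Gi.is_group Ls finL, symmetric]) (rule dvd_triv_left)
  then have "card (proj i L) dvd p ^ k" using k by simp
  then obtain j where "card (proj i L) = p ^ j" using divides_primepow_nat[OF prime] by blast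
  then show ?thesis using sub by (auto simp: psub_def)
qed

lemma PiE_psub:
  assumes b: "\<beta> \<in> (\<Pi>\<^sub>E i\<in>I. psub p (G i))"
  shows "PiE I \<beta> \<in> psub p PX"
proof -
  have sub: "subgroup (PiE I \<beta>) PX"
    using b PiE_subgroup_product_group[of I G \<beta>] grp by (auto simp: psub_def)
  have "\<forall>i\<in>I. \<exists>k. card (\<beta> i) = p ^ k" using b by (auto simp: psub_def)
  then obtain k where k: "\<forall>i\<in>I. card (\<beta> i) = p ^ k i" by metis
  have "card (PiE I \<beta>) = (\<Prod>i\<in>I. card (\<beta> i))" using finI by (rule card_PiE)
  also have "\<dots> = (\<Prod>i\<in>I. p ^ k i)" using k by simp
  also have "\<dots> = p ^ (\<Sum>i\<in>I. k i)" by (simp add: power_sum)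
  finally show ?thesis using sub by (auto simp: psub_def)
qed

lemma sub_PiE_iff:
  assumes "L \<subseteq> carrier PX"
  shows "L \<subseteq> PiE I \<beta> \<longleftrightarrow> (\<forall>i\<in>I. proj i L \<subseteq> \<beta> i)"
  using assms by (auto simp: proj_def PiE_iff subset_iff)

lemma proj_PiE:
  assumes ne: "\<forall>i\<in>I. \<beta> i \<noteq> {}" and i: "i \<in> I"
  shows "proj i (PiE I \<beta>) = \<beta> i"
proof
  show "proj i (PiE I \<beta>) \<subseteq> \<beta> i"
  proof
    fix b assume "b \<in> proj i (PiE I \<beta>)"
    then obtain f where f: "f \<in> PiE I \<beta>" "b = f i" unfolding proj_def by blast
    then show "b \<in> \<beta> i" using PiE_mem[OF f(1) i] by simp
  qed
  show "\<beta> i \<subseteq> proj i (PiE I \<beta>)"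
  proof
    fix b assume b: "b \<in> \<beta> i"
    have "PiE I \<beta> \<noteq> {}" using ne by (simp add: PiE_eq_empty_iff)
    then obtain f where f: "f \<in> PiE I \<beta>" by (meson ex_in_conv)
    have "f(i := b) \<in> PiE I \<beta>" using f b i by (auto simp: PiE_iff extensional_def)
    then show "b \<in> proj i (PiE I \<beta>)" unfolding proj_def by (rule rev_image_eqI) simp
  qed
qed

lemma psub_ne: "A \<in> psub p Gr \<Longrightarrow> A \<noteq> {}"
  unfolding psub_def by (auto dest: subgroup.one_closed)

lemma PiE_inj: "inj_on (PiE I) (\<Pi>\<^sub>E i\<in>I. psub p (G i))"
proof (rule inj_onI)
  fix \<beta> \<beta>' assume b: "\<beta> \<in> (\<Pi>\<^sub>E i\<in>I. psub p (G i))" and b': "\<beta>' \<in> (\<Pi>\<^sub>E i\<in>I. psub p (G i))"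
    and eq: "PiE I \<beta> = PiE I \<beta>'"
  have "\<forall>i\<in>I. \<beta> i \<noteq> {}" "\<forall>i\<in>I. \<beta>' i \<noteq> {}" using b b' psub_ne by (auto simp: PiE_iff)
  then have "\<forall>i\<in>I. \<beta> i = \<beta>' i" using eq proj_PiE by (metis (no_types, lifting))
  then show "\<beta> = \<beta>'" using PiE_ext[OF b b'] by blast
qed

lemma centralizer_X:
  assumes Lc: "L \<subseteq> carrier PX"
  shows "centralizer PX L = PiE I (\<lambda>i. centralizer (G i) (proj i L))"
proof
  show "centralizer PX L \<subseteq> PiE I (\<lambda>i. centralizer (G i) (proj i L))"
  proof
    fix g assume g: "g \<in> centralizer PX L"
    then have gc: "g \<in> carrier PX" and gcomm: "\<And>l. l \<in> L \<Longrightarrow> g \<otimes>\<^bsub>PX\<^esub> l = l \<otimes>\<^bsub>PX\<^esub> g"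
      by (auto simp: centralizer_def)
    have "g i \<in> centralizer (G i) (proj i L)" if i: "i \<in> I" for i
    proof -
      have "g i \<otimes>\<^bsub>G i\<^esub> a = a \<otimes>\<^bsub>G i\<^esub> g i" if a: "a \<in> proj i L" for a
      proof -
        obtain l where l: "l \<in> L" "a = l i" using a by (auto simp: proj_def)
        have "(\<lambda>j\<in>I. g j \<otimes>\<^bsub>G j\<^esub> l j) = (\<lambda>j\<in>I. l j \<otimes>\<^bsub>G j\<^esub> g j)"
          using gcomm[OF l(1)] by simp
        then have "(\<lambda>j\<in>I. g j \<otimes>\<^bsub>G j\<^esub> l j) i = (\<lambda>j\<in>I. l j \<otimes>\<^bsub>G j\<^esub> g j) i" by simp
        then show ?thesis using i l by simp
      qed
      then show ?thesis using gc i by (auto simp: centralizer_def PiE_iff)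
    qed
    then show "g \<in> PiE I (\<lambda>i. centralizer (G i) (proj i L))"
      using gc by (auto simp: PiE_iff)
  qed
next
  show "PiE I (\<lambda>i. centralizer (G i) (proj i L)) \<subseteq> centralizer PX L"
  proof
    fix g assume g: "g \<in> PiE I (\<lambda>i. centralizer (G i) (proj i L))"
    then have gc: "g \<in> carrier PX" by (auto simp: PiE_iff centralizer_def)
    have "g \<otimes>\<^bsub>PX\<^esub> l = l \<otimes>\<^bsub>PX\<^esub> g" if l: "l \<in> L" for l
    proof -
      have "g j \<otimes>\<^bsub>G j\<^esub> l j = l j \<otimes>\<^bsub>G j\<^esub> g j" if j: "j \<in> I" for j
      proof -
        have "l j \<in> proj j L" using l by (auto simp: proj_def)
        then show ?thesis using g j by (auto simp: PiE_iff centralizer_def)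
      qed
      then show ?thesis by (simp add: restrict_def) (rule ext, simp)
    qed
    then show "g \<in> centralizer PX L" using gc by (auto simp: centralizer_def)
  qed
qed

lemma one_X: "{\<one>\<^bsub>PX\<^esub>} = PiE I (\<lambda>i. {\<one>\<^bsub>G i\<^esub>})"
proof -
  have "(\<lambda>i\<in>I. \<one>\<^bsub>G i\<^esub>) \<in> extensional I" by simp
  from PiE_singleton[OF this] show ?thesis by (simp cong: PiE_cong)
qed

end



context prodctx begin

theorem main_formula: "1 - chi_Fstar p PX = (\<Prod>i\<in>I. 1 - chi_Fstar p (G i))"
proof -
  let ?Pb = "PiE I (\<lambda>i. psub p (G i))"
  let ?Cl = "PiE I ` ?Pb"
  have ex: "\<forall>i\<in>I. \<exists>\<rho>::'a set \<Rightarrow> rat. \<forall>A\<in>psub p (G i).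
      (\<Sum>B\<in>{B\<in>psub p (G i). A \<subseteq> B}. \<rho> B) = of_nat (card (centralizer (G i) A))"
  proof
    fix i assume i: "i \<in> I"
    show "\<exists>\<rho>::'a set \<Rightarrow> rat. \<forall>A\<in>psub p (G i).
      (\<Sum>B\<in>{B\<in>psub p (G i). A \<subseteq> B}. \<rho> B) = of_nat (card (centralizer (G i) A))"
      by (rule tri_up_exists[where f="\<lambda>A. of_nat (card (centralizer (G i) A))",
            OF group.psub_finite[OF grp[OF i] finG[OF i]]])
  qed
  obtain \<rho> :: "'i \<Rightarrow> 'a set \<Rightarrow> rat" where rho: "\<forall>i\<in>I. \<forall>A\<in>psub p (G i).
      (\<Sum>B\<in>{B\<in>psub p (G i). A \<subseteq> B}. \<rho> i B) = of_nat (card (centralizer (G i) A))"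
    using bchoice[OF ex] by (elim exE) simp
  have chi_i: "1 - chi_Fstar p (G i) = \<rho> i {\<one>\<^bsub>G i\<^esub>} / of_nat (card (carrier (G i)))" if i: "i \<in> I" for i
    using group.chi_formula[OF grp[OF i] finG[OF i], of p "\<rho> i"] rho i by simp
  define \<psi> where "\<psi> B = (if B \<in> ?Cl then (\<Prod>i\<in>I. \<rho> i (proj i B)) else 0)" for B
  have ClX: "?Cl \<subseteq> psub p PX" using PiE_psub by auto
  have psi: "\<forall>L\<in>psub p PX. (\<Sum>B\<in>{B\<in>psub p PX. L \<subseteq> B}. \<psi> B) = of_nat (card (centralizer PX L))"
  proof
    fix L assume L: "L \<in> psub p PX"
    have Lc: "L \<subseteq> carrier PX" using group.psub_carrier[OF X_group L] .
    have finT: "finite {B\<in>psub p PX. L \<subseteq> B}" using group.psub_finite[OF X_group X_fin] by simp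
    have "(\<Sum>B\<in>{B\<in>psub p PX. L \<subseteq> B}. \<psi> B) = (\<Sum>B\<in>{B\<in>?Cl. L \<subseteq> B}. \<Prod>i\<in>I. \<rho> i (proj i B))"
    proof (rule sum.mono_neutral_cong_right[OF finT])
      show "{B\<in>?Cl. L \<subseteq> B} \<subseteq> {B\<in>psub p PX. L \<subseteq> B}" using ClX by auto
      show "\<forall>B\<in>{B\<in>psub p PX. L \<subseteq> B} - {B\<in>?Cl. L \<subseteq> B}. \<psi> B = 0"
        by (auto simp: \<psi>_def)
      show "\<And>B. B \<in> {B\<in>?Cl. L \<subseteq> B} \<Longrightarrow> \<psi> B = (\<Prod>i\<in>I. \<rho> i (proj i B))"
        by (simp add: \<psi>_def)
    qed
    also have "{B\<in>?Cl. L \<subseteq> B} = PiE I ` {\<beta>\<in>?Pb. L \<subseteq> PiE I \<beta>}" by auto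
    also have "(\<Sum>B\<in>PiE I ` {\<beta>\<in>?Pb. L \<subseteq> PiE I \<beta>}. \<Prod>i\<in>I. \<rho> i (proj i B))
        = (\<Sum>\<beta>\<in>{\<beta>\<in>?Pb. L \<subseteq> PiE I \<beta>}. \<Prod>i\<in>I. \<rho> i (proj i (PiE I \<beta>)))"
      by (subst sum.reindex[OF inj_on_subset[OF PiE_inj]]) (auto simp: o_def)
    also have "\<dots> = (\<Sum>\<beta>\<in>{\<beta>\<in>?Pb. L \<subseteq> PiE I \<beta>}. \<Prod>i\<in>I. \<rho> i (\<beta> i))"
    proof (rule sum.cong[OF refl], rule prod.cong[OF refl])
      fix \<beta> i assume b: "\<beta> \<in> {\<beta>\<in>?Pb. L \<subseteq> PiE I \<beta>}" and i: "i \<in> I"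
      have "\<forall>j\<in>I. \<beta> j \<noteq> {}" using b psub_ne by (auto simp: PiE_iff)
      then have "proj i (PiE I \<beta>) = \<beta> i" using i by (rule proj_PiE)
      then show "\<rho> i (proj i (PiE I \<beta>)) = \<rho> i (\<beta> i)" by simp
    qed
    also have "{\<beta>\<in>?Pb. L \<subseteq> PiE I \<beta>} = PiE I (\<lambda>i. {A\<in>psub p (G i). proj i L \<subseteq> A})"
    proof (rule Set.set_eqI)
      fix \<beta>
      show "\<beta> \<in> {\<beta>\<in>?Pb. L \<subseteq> PiE I \<beta>} \<longleftrightarrow> \<beta> \<in> PiE I (\<lambda>i. {A\<in>psub p (G i). proj i L \<subseteq> A})"
        using sub_PiE_iff[OF Lc, of \<beta>] by (auto simp: PiE_iff)
    qed
    also have "(\<Sum>\<beta>\<in>PiE I (\<lambda>i. {A\<in>psub p (G i). proj i L \<subseteq> A}). \<Prod>i\<in>I. \<rho> i (\<beta> i))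
        = (\<Prod>i\<in>I. \<Sum>A\<in>{A\<in>psub p (G i). proj i L \<subseteq> A}. \<rho> i A)"
      by (rule prod_sum_PiE[symmetric]) (use finI group.psub_finite[OF grp finG] in auto)
    also have "\<dots> = (\<Prod>i\<in>I. of_nat (card (centralizer (G i) (proj i L))))"
      using rho proj_psub[OF L] by (intro prod.cong) auto
    also have "\<dots> = of_nat (card (centralizer PX L))"
      unfolding centralizer_X[OF Lc] card_PiE[OF finI] of_nat_prod ..
    finally show "(\<Sum>B\<in>{B\<in>psub p PX. L \<subseteq> B}. \<psi> B) = of_nat (card (centralizer PX L))" .
  qed
  have chiX: "1 - chi_Fstar p PX = \<psi> {\<one>\<^bsub>PX\<^esub>} / of_nat (card (carrier PX))"
    using group.chi_formula[OF X_group X_fin psi] .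
  have oneb: "(\<lambda>i\<in>I. {\<one>\<^bsub>G i\<^esub>}) \<in> ?Pb" using group.one_psub[OF grp] by auto
  have one_eq: "{\<one>\<^bsub>PX\<^esub>} = PiE I (\<lambda>i\<in>I. {\<one>\<^bsub>G i\<^esub>})"
    using one_X by (simp cong: PiE_cong)
  have "{\<one>\<^bsub>PX\<^esub>} \<in> ?Cl" using one_eq oneb by simp
  then have "\<psi> {\<one>\<^bsub>PX\<^esub>} = (\<Prod>i\<in>I. \<rho> i (proj i {\<one>\<^bsub>PX\<^esub>}))" by (simp add: \<psi>_def)
  also have "\<dots> = (\<Prod>i\<in>I. \<rho> i {\<one>\<^bsub>G i\<^esub>})"
  proof (rule prod.cong[OF refl])
    fix i assume i: "i \<in> I"
    have "\<forall>j\<in>I. {\<one>\<^bsub>G j\<^esub>} \<noteq> {}" by simp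
    then have "proj i (PiE I (\<lambda>i. {\<one>\<^bsub>G i\<^esub>})) = {\<one>\<^bsub>G i\<^esub>}" using i by (rule proj_PiE)
    then show "\<rho> i (proj i {\<one>\<^bsub>PX\<^esub>}) = \<rho> i {\<one>\<^bsub>G i\<^esub>}" using one_X by simp
  qed
  finally have psi1: "\<psi> {\<one>\<^bsub>PX\<^esub>} = (\<Prod>i\<in>I. \<rho> i {\<one>\<^bsub>G i\<^esub>})" .
  have cardX: "card (carrier PX) = (\<Prod>i\<in>I. card (carrier (G i)))"
    using card_PiE[OF finI] by simp
  have "(\<Prod>i\<in>I. 1 - chi_Fstar p (G i)) = (\<Prod>i\<in>I. \<rho> i {\<one>\<^bsub>G i\<^esub>} / of_nat (card (carrier (G i))))"
    using chi_i by (intro prod.cong) auto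
  also have "\<dots> = (\<Prod>i\<in>I. \<rho> i {\<one>\<^bsub>G i\<^esub>}) / (\<Prod>i\<in>I. of_nat (card (carrier (G i))))"
    by (rule prod_dividef)
  also have "\<dots> = 1 - chi_Fstar p PX" using chiX psi1 cardX by simp
  finally show ?thesis by simp
qed

end


theorem theorem6p2:
  fixes p n :: nat and G :: "nat \<Rightarrow> ('a, 'b) monoid_scheme"
  assumes "Factorial_Ring.prime p"
    and "\<And>i. i \<in> {1..n} \<Longrightarrow> group (G i)"
    and "\<And>i. i \<in> {1..n} \<Longrightarrow> finite (carrier (G i))"
  shows "1 - chi_Fstar p (product_group {1..n} G) = (\<Prod>i\<in>{1..n}. 1 - chi_Fstar p (G i))"
proof -
  interpret prodctx "{1..n}" G p
    by (rule prodctx.intro) (use assms in auto)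
  show ?thesis by (rule main_formula)
qed

end
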